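(* Let $n>24$, $0<\epsilon<\frac13$, $\delta>0$, $m=\epsilon^{-2}n^{1+\delta}$ (assumed to be an integer), and let $A\subseteq U^m$ be the set $$A=\left\{y\in U^m:\ \left|\sum_{i=1}^n\frac{k_i(y)(k_i(y)-1)}{m(m-1)}\cdot\frac1{\|p\|^2}-1\right|\le 3\epsilon\right\}.$$ For $s>0$ let $C_s=\{x\in U^m: d_T(x,A)<s\}$. Then for all $s>0$, $\mathsf P(C_s)\ge 1-\frac{10}{9}e^{-s^2/4}$.
   Context: Standing setup: $U$ is a finite set (the key space) with a probability measure $q$; $T=\{1,\dots,n\}$; $h:U\to T$ is an arbitrary function. $p_i=\sum_{u\in h^{-1}(i)}q(u)$ and $\|p\|^2=\sum_{i=1}^n p_i^2$. $U^m$ carries the product measure $q^m$, and $\mathsf P$ denotes probability under $q^m$. $k_i(y)=|\{j: h(y_j)=i\}|$. Talagrand's convex distance: for $x\in U^m$ and $A\subseteq U^m$, $d_T(x,A)=\sup\{\inf_{y\in A}\sum_{j=1}^m\alpha_j\mathbf 1(x_j\ne y_j)\ :\ \alpha\in\mathbb R^m,\ \alpha_j\ge 0,\ \sum_j\alpha_j^2\le 1\}$, where $\mathbf 1(x_j\ne y_j)$ is $1$ if $x_j\ne y_j$ and $0$ otherwise. *)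

theory Defs
  imports "HOL-Analysis.Analysis"
begin

definition cube :: "'a set \<Rightarrow> nat \<Rightarrow> (nat \<Rightarrow> 'a) set" where
  "cube U m = PiE {..<m} (\<lambda>_. U)"

definition prodprob :: "('a \<Rightarrow> real) \<Rightarrow> nat \<Rightarrow> (nat \<Rightarrow> 'a) set \<Rightarrow> real" where
  "prodprob q m S = (\<Sum>x\<in>S. \<Prod>j<m. q (x j))"

definition bucket_prob :: "'a set \<Rightarrow> ('a \<Rightarrow> real) \<Rightarrow> ('a \<Rightarrow> nat) \<Rightarrow> nat \<Rightarrow> real" where
  "bucket_prob U q h i = (\<Sum>u\<in>{u\<in>U. h u = i}. q u)"

definition normsq :: "'a set \<Rightarrow> ('a \<Rightarrow> real) \<Rightarrow> ('a \<Rightarrow> nat) \<Rightarrow> nat \<Rightarrow> real" where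
  "normsq U q h n = (\<Sum>i=1..n. (bucket_prob U q h i)^2)"

definition kcount :: "('a \<Rightarrow> nat) \<Rightarrow> nat \<Rightarrow> (nat \<Rightarrow> 'a) \<Rightarrow> nat \<Rightarrow> nat" where
  "kcount h m y i = card {j\<in>{..<m}. h (y j) = i}"

text \<open>Talagrand's convex distance (with values in ereal; inf over empty A is \<infinity>).\<close>
definition convex_dist :: "nat \<Rightarrow> (nat \<Rightarrow> 'a) \<Rightarrow> (nat \<Rightarrow> 'a) set \<Rightarrow> ereal" where
  "convex_dist m x A =
     (SUP \<alpha>\<in>{\<alpha>::nat \<Rightarrow> real. (\<forall>j<m. \<alpha> j \<ge> 0) \<and> (\<Sum>j<m. (\<alpha> j)^2) \<le> 1}.
        INF y\<in>A. ereal (\<Sum>j<m. \<alpha> j * (if x j \<noteq> y j then 1 else 0)))"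

end

theory Submission
  imports Defs
begin


definition Om :: "'a set \<Rightarrow> nat set \<Rightarrow> (nat \<Rightarrow> 'a) set" where
  "Om U I = PiE I (\<lambda>_. U)"
definition Wt :: "('a \<Rightarrow> real) \<Rightarrow> nat set \<Rightarrow> (nat \<Rightarrow> 'a) \<Rightarrow> real" where
  "Wt q I x = (\<Prod>j\<in>I. q (x j))"
definition Pr :: "('a \<Rightarrow> real) \<Rightarrow> nat set \<Rightarrow> (nat \<Rightarrow> 'a) set \<Rightarrow> real" where
  "Pr q I S = (\<Sum>x\<in>S. Wt q I x)"

lemma sum_Om_insert:
  assumes "i \<notin> I"
  shows "(\<Sum>x\<in>Om U (insert i I). g x) = (\<Sum>w\<in>U. \<Sum>x\<in>Om U I. g (x(i:=w)))"
proof -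
  have "(\<Sum>x\<in>Om U (insert i I). g x) = (\<Sum>x\<in>(\<lambda>(y, f). f(i := y)) ` (U \<times> Om U I). g x)"
    unfolding Om_def PiE_insert_eq by simp
  also have "\<dots> = (\<Sum>p\<in>U \<times> Om U I. g ((\<lambda>(y, f). f(i := y)) p))"
    using inj_combinator[OF assms, of "\<lambda>_. U"] unfolding Om_def
    by (subst sum.reindex) auto
  also have "\<dots> = (\<Sum>w\<in>U. \<Sum>x\<in>Om U I. g (x(i:=w)))"
    by (simp add: sum.cartesian_product split_def)
  finally show ?thesis .
qed

lemma Wt_upd:
  assumes "i \<notin> I" "finite I"
  shows "Wt q (insert i I) (x(i:=w)) = q w * Wt q I x"
proof -
  have "(\<Prod>j\<in>I. q ((x(i:=w)) j)) = (\<Prod>j\<in>I. q (x j))"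
    using assms(1) by (intro prod.cong) auto
  thus ?thesis unfolding Wt_def using assms by simp
qed

lemma Om_upd: "x \<in> Om U I \<Longrightarrow> w \<in> U \<Longrightarrow> x(i:=w) \<in> Om U (insert i I)"
  unfolding Om_def by (auto simp: PiE_iff extensional_def)

lemma Wt_nonneg: "\<forall>u\<in>U. q u \<ge> 0 \<Longrightarrow> x \<in> Om U I \<Longrightarrow> Wt q I x \<ge> 0"
  unfolding Wt_def Om_def by (intro prod_nonneg) (auto simp: PiE_iff)

lemma sum_Wt:
  assumes "finite U" "finite I" "(\<Sum>u\<in>U. q u) = 1"
  shows "(\<Sum>x\<in>Om U I. Wt q I x) = 1"
  using prod_sum_PiE[of I "\<lambda>_. U" "\<lambda>_ u. q u"] assms unfolding Om_def Wt_def by simp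

definition valid :: "(nat \<Rightarrow> 'a) set \<Rightarrow> (real \<times> (nat \<Rightarrow> 'a)) list \<Rightarrow> bool" where
  "valid A L \<longleftrightarrow> (\<forall>p\<in>set L. fst p \<ge> 0 \<and> snd p \<in> A) \<and> sum_list (map fst L) = 1"
definition zc :: "(nat \<Rightarrow> 'a) \<Rightarrow> (real \<times> (nat \<Rightarrow> 'a)) list \<Rightarrow> nat \<Rightarrow> real" where
  "zc x L j = sum_list (map (\<lambda>p. fst p * (if x j \<noteq> snd p j then 1 else 0)) L)"
definition vl :: "nat set \<Rightarrow> (nat \<Rightarrow> 'a) \<Rightarrow> (real \<times> (nat \<Rightarrow> 'a)) list \<Rightarrow> real" where
  "vl I x L = (\<Sum>j\<in>I. (zc x L j)^2)"
definition FF :: "nat set \<Rightarrow> (nat \<Rightarrow> 'a) set \<Rightarrow> (nat \<Rightarrow> 'a) \<Rightarrow> real" where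
  "FF I A x = Inf (vl I x ` {L. valid A L})"

lemma vl_nonneg: "vl I x L \<ge> 0"
  unfolding vl_def by (intro sum_nonneg) auto

lemma FF_le: "valid A L \<Longrightarrow> FF I A x \<le> vl I x L"
  unfolding FF_def by (rule cInf_lower) (auto intro: bdd_belowI[of _ 0] vl_nonneg)

lemma valid_single: "y \<in> A \<Longrightarrow> valid A [(1, y)]"
  unfolding valid_def by auto

lemma FF_ge: "A \<noteq> {} \<Longrightarrow> (\<And>L. valid A L \<Longrightarrow> c \<le> vl I x L) \<Longrightarrow> c \<le> FF I A x"
  unfolding FF_def by (rule cInf_greatest) (auto dest: valid_single)

lemma FF_nonneg: "A \<noteq> {} \<Longrightarrow> 0 \<le> FF I A x"
  by (rule FF_ge) (auto intro: vl_nonneg)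

lemma zc_nonneg: "\<forall>p\<in>set L. fst p \<ge> 0 \<Longrightarrow> zc x L j \<ge> 0"
  unfolding zc_def by (induction L) auto

lemma zc_le: "\<forall>p\<in>set L. fst p \<ge> 0 \<Longrightarrow> zc x L j \<le> sum_list (map fst L)"
  unfolding zc_def by (induction L) auto



lemma sum_list_cmult: "sum_list (map (\<lambda>p. (c::real) * f p) L) = c * sum_list (map f L)"
  by (induction L) (auto simp: algebra_simps)

lemma comb:
  fixes x :: "nat \<Rightarrow> 'a"
  assumes iI: "i \<notin> I" and fin: "finite I" and nu: "0 \<le> \<nu>" "\<nu> \<le> 1"
    and L1: "\<forall>p\<in>set L1. fst p \<ge> 0 \<and> (snd p)(i:=w) \<in> A"
    and s1: "\<nu> * sum_list (map fst L1) = \<nu>"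
    and L2: "valid B L2"
    and ch: "\<forall>y\<in>B. y(i := ch y) \<in> A"
  shows "FF (insert i I) A (x(i:=w)) \<le> \<nu> * vl I x L1 + (1-\<nu>) * vl I x L2 + (1-\<nu>)^2"
proof -
  define L where "L = map (\<lambda>p. (\<nu> * fst p, (snd p)(i:=w))) L1 @
     map (\<lambda>p. ((1-\<nu>) * fst p, (snd p)(i := ch (snd p)))) L2"
  have L2w: "\<forall>p\<in>set L2. fst p \<ge> 0" and L2s: "sum_list (map fst L2) = 1"
    using L2 unfolding valid_def by auto
  have "valid A L"
  proof -
    have "sum_list (map fst L) = \<nu> * sum_list (map fst L1) + (1-\<nu>) * sum_list (map fst L2)"
      unfolding L_def by (simp add: o_def sum_list_cmult)
    also have "\<dots> = 1" using s1 L2s by simp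
    finally show ?thesis using L1 L2 ch nu unfolding valid_def L_def by auto
  qed
  hence "FF (insert i I) A (x(i:=w)) \<le> vl (insert i I) (x(i:=w)) L" by (rule FF_le)
  also have "\<dots> = (zc (x(i:=w)) L i)^2 + (\<Sum>j\<in>I. (zc (x(i:=w)) L j)^2)"
    unfolding vl_def using iI fin by simp
  also have "\<dots> \<le> (1-\<nu>)^2 + (\<Sum>j\<in>I. \<nu> * (zc x L1 j)^2 + (1-\<nu>) * (zc x L2 j)^2)"
  proof (rule add_mono)
    have e: "zc (x(i:=w)) L i = (1-\<nu>) * zc (x(i:=w)) (map (\<lambda>p. (fst p, (snd p)(i := ch (snd p)))) L2) i"
      unfolding L_def zc_def by (simp add: o_def mult.assoc sum_list_cmult)
    have "0 \<le> zc (x(i:=w)) (map (\<lambda>p. (fst p, (snd p)(i := ch (snd p)))) L2) i"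
      by (rule zc_nonneg) (use L2w in auto)
    moreover have "zc (x(i:=w)) (map (\<lambda>p. (fst p, (snd p)(i := ch (snd p)))) L2) i \<le> 1"
      using zc_le[of "map (\<lambda>p. (fst p, (snd p)(i := ch (snd p)))) L2"] L2w L2s by (simp add: o_def)
    ultimately show "(zc (x(i:=w)) L i)^2 \<le> (1-\<nu>)^2" unfolding e using nu
      by (intro power_mono) (auto intro: mult_left_le mult_nonneg_nonneg)
  next
    show "(\<Sum>j\<in>I. (zc (x(i:=w)) L j)^2) \<le> (\<Sum>j\<in>I. \<nu> * (zc x L1 j)^2 + (1-\<nu>) * (zc x L2 j)^2)"
    proof (rule sum_mono)
      fix j assume "j \<in> I"
      hence ji: "j \<noteq> i" using iI by auto
      have e: "zc (x(i:=w)) L j = \<nu> * zc x L1 j + (1-\<nu>) * zc x L2 j"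
        unfolding L_def zc_def using ji by (simp add: o_def mult.assoc sum_list_cmult)
      have "(\<nu> * zc x L1 j + (1-\<nu>) * zc x L2 j)^2 \<le> \<nu> * (zc x L1 j)^2 + (1-\<nu>) * (zc x L2 j)^2"
      proof -
        have "\<nu> * (zc x L1 j)^2 + (1-\<nu>) * (zc x L2 j)^2 - (\<nu> * zc x L1 j + (1-\<nu>) * zc x L2 j)^2
            = \<nu> * (1-\<nu>) * (zc x L1 j - zc x L2 j)^2"
          by (simp add: power2_eq_square algebra_simps)
        also have "\<dots> \<ge> 0" using nu by simp
        finally show ?thesis by simp
      qed
      thus "(zc (x(i:=w)) L j)^2 \<le> \<nu> * (zc x L1 j)^2 + (1-\<nu>) * (zc x L2 j)^2" unfolding e .
    qed
  qed
  also have "\<dots> = \<nu> * vl I x L1 + (1-\<nu>) * vl I x L2 + (1-\<nu>)^2"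
    unfolding vl_def by (simp add: sum.distrib sum_distrib_left)
  finally show ?thesis .
qed



lemma inf_comb:
  fixes c k \<nu> :: real and S1 S2 :: "real set"
  assumes nu: "0 \<le> \<nu>" "\<nu> \<le> 1" and ne: "S1 \<noteq> {}" "S2 \<noteq> {}"
    and bd: "bdd_below S1" "bdd_below S2"
    and H: "\<forall>a\<in>S1. \<forall>b\<in>S2. c \<le> \<nu>*a + (1-\<nu>)*b + k"
  shows "c \<le> \<nu> * Inf S1 + (1-\<nu>) * Inf S2 + k"
proof -
  have H1: "\<forall>b\<in>S2. c \<le> \<nu> * Inf S1 + (1-\<nu>) * b + k"
  proof
    fix b assume b: "b \<in> S2"
    show "c \<le> \<nu> * Inf S1 + (1-\<nu>) * b + k"
    proof (cases "\<nu> = 0")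
      case True
      from ne obtain a where "a \<in> S1" by auto
      with H b True show ?thesis by force
    next
      case False
      hence pos: "\<nu> > 0" using nu by simp
      have "(c - k - (1-\<nu>)*b) / \<nu> \<le> Inf S1"
      proof (rule cInf_greatest[OF ne(1)])
        fix a assume "a \<in> S1"
        hence "c \<le> \<nu>*a + (1-\<nu>)*b + k" using H b by blast
        thus "(c - k - (1-\<nu>)*b) / \<nu> \<le> a" using pos by (simp add: divide_le_eq algebra_simps)
      qed
      thus ?thesis using pos by (simp add: divide_le_eq algebra_simps)
    qed
  qed
  show ?thesis
  proof (cases "\<nu> = 1")
    case True
    from ne obtain b where "b \<in> S2" by auto
    with H1 True show ?thesis by force
  next
    case False
    hence pos: "1 - \<nu> > 0" using nu by simp
    have "(c - k - \<nu> * Inf S1) / (1-\<nu>) \<le> Inf S2"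
    proof (rule cInf_greatest[OF ne(2)])
      fix b assume "b \<in> S2"
      hence "c \<le> \<nu> * Inf S1 + (1-\<nu>) * b + k" using H1 by blast
      thus "(c - k - \<nu> * Inf S1) / (1-\<nu>) \<le> b" using pos by (simp add: divide_le_eq algebra_simps)
    qed
    thus ?thesis using pos by (simp add: divide_le_eq algebra_simps)
  qed
qed

lemma exp_conv:
  fixes a b \<nu> :: real
  assumes "0 \<le> \<nu>" "\<nu> \<le> 1"
  shows "exp (\<nu> * a + (1-\<nu>) * b) \<le> \<nu> * exp a + (1-\<nu>) * exp b"
  using convex_onD[OF exp_convex, of "1-\<nu>" a b] assms by (simp add: algebra_simps)

lemma holder_exp:
  fixes w a b :: "'b \<Rightarrow> real"
  assumes fin: "finite S" and w: "\<forall>x\<in>S. w x \<ge> 0" and nu: "0 \<le> \<nu>" "\<nu> \<le> 1"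
    and Sa: "(\<Sum>x\<in>S. w x * exp (a x)) > 0" and Sb: "(\<Sum>x\<in>S. w x * exp (b x)) > 0"
  shows "(\<Sum>x\<in>S. w x * exp (\<nu> * a x + (1-\<nu>) * b x))
      \<le> exp (\<nu> * ln (\<Sum>x\<in>S. w x * exp (a x)) + (1-\<nu>) * ln (\<Sum>x\<in>S. w x * exp (b x)))"
proof -
  define A where "A = (\<Sum>x\<in>S. w x * exp (a x))"
  define B where "B = (\<Sum>x\<in>S. w x * exp (b x))"
  define K where "K = exp (\<nu> * ln A + (1-\<nu>) * ln B)"
  have A: "A > 0" and B: "B > 0" using Sa Sb unfolding A_def B_def by auto
  have pt: "exp (\<nu> * a x + (1-\<nu>) * b x) \<le> K * (\<nu> * (exp (a x) / A) + (1-\<nu>) * (exp (b x) / B))" for x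
  proof -
    have "exp (\<nu> * a x + (1-\<nu>) * b x) = K * exp (\<nu> * (a x - ln A) + (1-\<nu>) * (b x - ln B))"
      unfolding K_def by (simp add: exp_add[symmetric] algebra_simps)
    also have "\<dots> \<le> K * (\<nu> * exp (a x - ln A) + (1-\<nu>) * exp (b x - ln B))"
      unfolding K_def by (intro mult_left_mono exp_conv nu) auto
    also have "\<dots> = K * (\<nu> * (exp (a x) / A) + (1-\<nu>) * (exp (b x) / B))"
      using A B by (simp add: exp_diff)
    finally show ?thesis .
  qed
  have "(\<Sum>x\<in>S. w x * exp (\<nu> * a x + (1-\<nu>) * b x))
     \<le> (\<Sum>x\<in>S. w x * (K * (\<nu> * (exp (a x) / A) + (1-\<nu>) * (exp (b x) / B))))"
    by (intro sum_mono mult_left_mono pt) (use w in auto)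
  also have "\<dots> = K * (\<nu> / A * (\<Sum>x\<in>S. w x * exp (a x)) + (1-\<nu>) / B * (\<Sum>x\<in>S. w x * exp (b x)))"
    by (simp add: sum_distrib_left sum.distrib algebra_simps)
  also have "\<dots> = K" using A B unfolding A_def[symmetric] B_def[symmetric] by simp
  finally show ?thesis unfolding K_def A_def B_def .
qed

lemma exp_quarter: "exp (1/4::real) \<le> 4/3"
proof -
  have "exp (1/4::real) ^ 4 = exp 1" by (simp add: exp_of_nat_mult[symmetric])
  also have "\<dots> \<le> 3" by (rule exp_le)
  also have "\<dots> \<le> (4/3)^4" by (simp add: eval_nat_numeral)
  finally have "exp (1/4::real) ^ Suc 3 \<le> (4/3) ^ Suc 3" by simp
  thus ?thesis by (rule power_le_imp_le_base) simp
qed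

lemma exp_half: "exp (1/2::real) \<le> 2"
proof -
  have "exp (1/2::real) ^ 2 = exp 1" by (simp add: exp_of_nat_mult[symmetric])
  also have "\<dots> \<le> 3" by (rule exp_le)
  also have "\<dots> \<le> 2^2" by simp
  finally show ?thesis by (rule power2_le_imp_le) simp
qed

lemma exp_mhalf: "exp (-1/2::real) \<le> 2/3"
proof -
  have "3/2 \<le> exp (1/2::real)" using exp_ge_add_one_self[of "1/2::real"] by simp
  hence "1 / exp (1/2::real) \<le> 2/3" by (simp add: divide_le_eq)
  moreover have "exp (-1/2::real) = 1 / exp (1/2)" by (simp add: exp_minus inverse_eq_divide)
  ultimately show ?thesis by simp
qed

lemma num_key:
  fixes t :: real
  assumes t: "0 \<le> t" "t \<le> 1/2"
  shows "exp (t - t^2) + exp (-t) \<le> 2"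
proof -
  define u where "u = t - t^2"
  have "u = t * (1 - t)" unfolding u_def by (simp add: power2_eq_square algebra_simps)
  hence u0: "0 \<le> u" using t by simp
  have ut: "u \<le> t" unfolding u_def by simp
  have u4: "u \<le> 1/4"
  proof -
    have "1/4 - u = (t - 1/2)^2" unfolding u_def by (simp add: power2_eq_square algebra_simps)
    thus ?thesis by (metis diff_ge_0_iff_ge zero_le_power2)
  qed
  obtain \<xi> where \<xi>: "\<bar>\<xi>\<bar> \<le> \<bar>u\<bar>" "exp u = (\<Sum>m<3. u^m / fact m) + exp \<xi> / fact 3 * u^3"
    using Maclaurin_exp_le[of u 3] by blast
  obtain \<eta> where \<eta>: "\<bar>\<eta>\<bar> \<le> \<bar>-t\<bar>" "exp (-t) = (\<Sum>m<4. (-t)^m / fact m) + exp \<eta> / fact 4 * (-t)^4"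
    using Maclaurin_exp_le[of "-t" 4] by blast
  have E1: "exp \<xi> \<le> 4/3"
  proof -
    have "\<xi> \<le> 1/4" using \<xi>(1) u0 u4 abs_ge_self[of \<xi>] abs_of_nonneg[OF u0] by linarith
    hence "exp \<xi> \<le> exp (1/4)" by simp
    thus ?thesis using exp_quarter by linarith
  qed
  have E2: "exp \<eta> \<le> 2"
  proof -
    have "\<eta> \<le> 1/2" using \<eta>(1) t abs_ge_self[of \<eta>] by simp
    hence "exp \<eta> \<le> exp (1/2)" by simp
    thus ?thesis using exp_half by linarith
  qed
  have e1: "exp u = 1 + u + u^2/2 + exp \<xi> / 6 * u^3"
    using \<xi>(2) by (simp add: eval_nat_numeral fact_numeral)
  have e2: "exp (-t) = 1 - t + t^2/2 - t^3/6 + exp \<eta> / 24 * t^4"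
    using \<eta>(2) by (simp add: eval_nat_numeral fact_numeral)
  have uu: "u^2 = t^2 - 2*t^3 + t^4" unfolding u_def by (simp add: power2_eq_square eval_nat_numeral algebra_simps)
  have u3: "u^3 \<le> t^3" using u0 ut by (intro power_mono) auto
  have a1: "exp \<xi> * u^3 \<le> 4/3 * t^3"
    using E1 u3 u0 by (intro mult_mono) auto
  have a2: "exp \<eta> * t^4 \<le> 2 * t^4"
    using E2 t by (intro mult_mono) auto
  have t4: "t^4 \<le> t^3 / 2"
  proof -
    have "t^4 = t^3 * t" by (simp add: eval_nat_numeral)
    also have "\<dots> \<le> t^3 * (1/2)" using t by (intro mult_left_mono) auto
    finally show ?thesis by simp
  qed
  have t3: "t^3 \<ge> 0" using t by simp
  have "exp (t - t^2) = 1 + u + u^2/2 + exp \<xi> / 6 * u^3" using e1 u_def by simp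
  thus ?thesis using e2 uu a1 a2 t4 t3 u_def by linarith
qed



lemma num2:
  fixes Pa Pb \<nu> :: real
  assumes pa: "0 < Pa" and pab: "Pa \<le> Pb" and r: "Pa / Pb > 2/3"
    and nu: "\<nu> = 1 + 2 * ln (Pa / Pb)"
  shows "exp ((1-\<nu>)^2/4 - \<nu> * ln Pa - (1-\<nu>) * ln Pb) \<le> (2 - Pa/Pb) / Pb"
proof -
  have pb: "0 < Pb" using pa pab by simp
  define L where "L = ln (Pa / Pb)"
  have L: "L = ln Pa - ln Pb" unfolding L_def using pa pb by (simp add: ln_div)
  have L0: "L \<le> 0" unfolding L_def using pa pab pb by simp
  have "exp (-1/2) \<le> Pa / Pb" using exp_mhalf r by linarith
  hence "-1/2 \<le> L" unfolding L_def using pa pb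
    by (metis divide_pos_pos ln_exp ln_le_cancel_iff exp_gt_zero)
  have "(1-\<nu>)^2/4 - \<nu> * ln Pa - (1-\<nu>) * ln Pb = ((-L) - (-L)^2) - ln Pb"
    unfolding nu L_def[symmetric] L by (simp add: power2_eq_square field_simps)
  hence "exp ((1-\<nu>)^2/4 - \<nu> * ln Pa - (1-\<nu>) * ln Pb) = exp ((-L) - (-L)^2) / Pb"
    using pb by (simp add: exp_diff)
  also have "\<dots> \<le> (2 - exp (-(-L))) / Pb"
    using num_key[of "-L"] L0 \<open>-1/2 \<le> L\<close> pb by (intro divide_right_mono) auto
  also have "exp (-(-L)) = Pa / Pb" unfolding L_def using pa pb by simp
  finally show ?thesis .
qed

lemma Pr_inter:
  assumes "finite (Om U I)" "S \<subseteq> Om U I"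
  shows "Pr q I S = (\<Sum>x\<in>Om U I. if x \<in> S then Wt q I x else 0)"
proof -
  have "Om U I \<inter> S = S" using assms by auto
  thus ?thesis unfolding Pr_def using sum.inter_restrict[OF assms(1), of "Wt q I" S] by simp
qed

lemma Pr_ne: "Pr q I S > 0 \<Longrightarrow> S \<noteq> {}"
  unfolding Pr_def by auto

lemma Pr_mono:
  assumes "finite (Om U I)" "S \<subseteq> T" "T \<subseteq> Om U I" "\<forall>u\<in>U. q u \<ge> 0"
  shows "Pr q I S \<le> Pr q I T"
  unfolding Pr_def using assms
  by (intro sum_mono2) (auto intro: finite_subset Wt_nonneg)

lemma S_ge1:
  assumes "finite U" "finite I" "(\<Sum>u\<in>U. q u) = 1" "\<forall>u\<in>U. q u \<ge> 0" "A \<noteq> {}"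
  shows "1 \<le> (\<Sum>x\<in>Om U I. Wt q I x * exp (FF I A x / 4))"
proof -
  have "1 = (\<Sum>x\<in>Om U I. Wt q I x)" using sum_Wt assms by metis
  also have "\<dots> \<le> (\<Sum>x\<in>Om U I. Wt q I x * exp (FF I A x / 4))"
  proof (rule sum_mono)
    fix x assume x: "x \<in> Om U I"
    have "1 \<le> exp (FF I A x / 4)" using FF_nonneg[OF assms(5)] by simp
    thus "Wt q I x \<le> Wt q I x * exp (FF I A x / 4)"
      using Wt_nonneg[OF assms(4) x] by (simp add: mult_le_cancel_left1)
  qed
  finally show ?thesis .
qed

lemma finite_Om: "finite U \<Longrightarrow> finite I \<Longrightarrow> finite (Om U I)"
  unfolding Om_def by (intro finite_PiE) auto

theorem talagrand:
  assumes finU: "finite U" and qn: "\<forall>u\<in>U. q u \<ge> 0" and qs: "(\<Sum>u\<in>U. q u) = 1"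
  shows "finite I \<Longrightarrow> A \<subseteq> Om U I \<Longrightarrow> Pr q I A > 0 \<Longrightarrow>
     Pr q I A * (\<Sum>x\<in>Om U I. Wt q I x * exp (FF I A x / 4)) \<le> 1"
proof (induction I arbitrary: A rule: finite_induct)
  case empty
  have Om0: "Om U {} = {\<lambda>_. undefined}" unfolding Om_def by simp
  have A: "A = {\<lambda>_. undefined}" using empty.prems Pr_ne[OF empty.prems(2)] Om0 by auto
  have y: "(\<lambda>_. undefined) \<in> A" using A by simp
  have "FF {} A x \<le> 0" for x
    using FF_le[OF valid_single[OF y], of "{}" x] by (simp add: vl_def)
  thus ?case unfolding Om0 A[symmetric] using A by (simp add: Pr_def Wt_def)
next
  case (insert i I)
  note iI = insert.hyps(2) and finI = insert.hyps(1)
  define I' where "I' = insert i I"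
  have A: "A \<subseteq> Om U I'" and PA: "Pr q I' A > 0" using insert.prems unfolding I'_def by auto
  define Aw where "Aw w = {y \<in> Om U I. y(i:=w) \<in> A}" for w
  define B where "B = {y \<in> Om U I. \<exists>w\<in>U. y(i:=w) \<in> A}"
  define ch where "ch y = (SOME w. w \<in> U \<and> y(i:=w) \<in> A)" for y
  have ch: "\<forall>y\<in>B. y(i := ch y) \<in> A"
  proof
    fix y assume "y \<in> B"
    then obtain w where "w \<in> U \<and> y(i:=w) \<in> A" unfolding B_def by auto
    hence "ch y \<in> U \<and> y(i := ch y) \<in> A" unfolding ch_def by (rule someI)
    thus "y(i := ch y) \<in> A" by simp
  qed
  have finO: "finite (Om U I)" and finO': "finite (Om U I')"
    using finU finI unfolding I'_def by (auto intro: finite_Om)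
  have AwO: "Aw w \<subseteq> Om U I" for w unfolding Aw_def by auto
  have BO: "B \<subseteq> Om U I" unfolding B_def by auto
  have AwB: "w \<in> U \<Longrightarrow> Aw w \<subseteq> B" for w unfolding Aw_def B_def by auto
  have PAeq: "Pr q I' A = (\<Sum>w\<in>U. q w * Pr q I (Aw w))"
  proof -
    have "Pr q I' A = (\<Sum>x\<in>Om U I'. if x \<in> A then Wt q I' x else 0)"
      by (rule Pr_inter[OF finO' A])
    also have "\<dots> = (\<Sum>w\<in>U. \<Sum>x\<in>Om U I. if x(i:=w) \<in> A then Wt q I' (x(i:=w)) else 0)"
      unfolding I'_def by (rule sum_Om_insert[OF iI])
    also have "\<dots> = (\<Sum>w\<in>U. q w * (\<Sum>x\<in>Om U I. if x \<in> Aw w then Wt q I x else 0))"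
      unfolding I'_def Aw_def sum_distrib_left
      by (intro sum.cong refl) (auto simp: Wt_upd[OF iI finI])
    also have "\<dots> = (\<Sum>w\<in>U. q w * Pr q I (Aw w))"
      using Pr_inter[OF finO AwO] by simp
    finally show ?thesis .
  qed
  have PAw_le: "w \<in> U \<Longrightarrow> Pr q I (Aw w) \<le> Pr q I B" for w
    by (rule Pr_mono[OF finO AwB BO qn])
  have PA_le: "Pr q I' A \<le> Pr q I B"
  proof -
    have "Pr q I' A \<le> (\<Sum>w\<in>U. q w * Pr q I B)"
      unfolding PAeq using qn PAw_le by (intro sum_mono mult_left_mono) auto
    also have "\<dots> = Pr q I B" using qs by (simp add: sum_distrib_right[symmetric])
    finally show ?thesis .
  qed
  define PB where "PB = Pr q I B"
  have PB: "PB > 0" using PA PA_le unfolding PB_def by simp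
  have Bne: "B \<noteq> {}" using PB Pr_ne unfolding PB_def by auto
  define SB where "SB = (\<Sum>x\<in>Om U I. Wt q I x * exp (FF I B x / 4))"
  have SB: "SB \<le> 1 / PB"
    using insert.IH[OF BO] PB unfolding SB_def PB_def by (simp add: field_simps)
  have SB1: "SB \<ge> 1" unfolding SB_def by (rule S_ge1[OF finU finI qs qn Bne])
  define T where "T w = (\<Sum>x\<in>Om U I. Wt q I x * exp (FF I' A (x(i:=w)) / 4))" for w
  have Tb: "T w \<le> (2 - Pr q I (Aw w) / PB) / PB" if w: "w \<in> U" for w
  proof (cases "Pr q I (Aw w) / PB \<le> 2/3")
    case True
    have pt: "FF I' A (x(i:=w)) \<le> FF I B x + 1" for x
    proof -
      have "FF I' A (x(i:=w)) - 1 \<le> FF I B x"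
      proof (rule FF_ge[OF Bne])
        fix L2 assume "valid B L2"
        from comb[where \<nu>=0 and ?L1.0="[]" and w=w and x=x, OF iI finI _ _ _ _ this ch]
        show "FF I' A (x(i:=w)) - 1 \<le> vl I x L2" unfolding I'_def by simp
      qed
      thus ?thesis by simp
    qed
    have "T w \<le> (\<Sum>x\<in>Om U I. Wt q I x * exp (FF I B x / 4 + 1/4))"
      unfolding T_def using pt Wt_nonneg[OF qn]
      by (intro sum_mono mult_left_mono) (auto simp: add_divide_distrib[symmetric])
    also have "\<dots> = exp (1/4) * SB"
      unfolding SB_def by (simp add: exp_add sum_distrib_left algebra_simps)
    also have "\<dots> \<le> 4/3 * (1 / PB)"
      using exp_quarter SB SB1 by (intro mult_mono) auto
    also have "\<dots> = (4/3) / PB" by simp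
    also have "\<dots> \<le> (2 - Pr q I (Aw w) / PB) / PB"
      using True PB by (intro divide_right_mono) auto
    finally show ?thesis by simp
  next
    case False
    define Pa where "Pa = Pr q I (Aw w)"
    have PaB: "Pa \<le> PB" unfolding Pa_def PB_def by (rule PAw_le[OF w])
    have "Pa / PB > 0" using False unfolding Pa_def[symmetric] by linarith
    hence Pa: "Pa > 0" using PB by (auto simp: zero_less_divide_iff)
    have Ane: "Aw w \<noteq> {}" using Pa Pr_ne unfolding Pa_def by auto
    define \<nu> where "\<nu> = 1 + 2 * ln (Pa / PB)"
    have r: "Pa / PB > 2/3" using False unfolding Pa_def by simp
    have "exp (-1/2) \<le> Pa / PB" using exp_mhalf r by linarith
    hence "-1/2 \<le> ln (Pa / PB)" using Pa PB
      by (metis divide_pos_pos ln_exp ln_le_cancel_iff exp_gt_zero)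
    moreover have "ln (Pa / PB) \<le> 0" using Pa PB PaB by simp
    ultimately have nu: "0 \<le> \<nu>" "\<nu> \<le> 1" unfolding \<nu>_def by auto
    define SA where "SA = (\<Sum>x\<in>Om U I. Wt q I x * exp (FF I (Aw w) x / 4))"
    have SA: "SA \<le> 1 / Pa"
      using insert.IH[OF AwO] Pa unfolding SA_def Pa_def by (simp add: field_simps)
    have SA1: "SA \<ge> 1" unfolding SA_def by (rule S_ge1[OF finU finI qs qn Ane])
    have pt: "FF I' A (x(i:=w)) \<le> \<nu> * FF I (Aw w) x + (1-\<nu>) * FF I B x + (1-\<nu>)^2" for x
      unfolding FF_def
    proof (rule inf_comb[OF nu])
      show "vl I x ` {L. valid (Aw w) L} \<noteq> {}" using Ane valid_single by blast
      show "vl I x ` {L. valid B L} \<noteq> {}" using Bne valid_single by blast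
      show "bdd_below (vl I x ` {L. valid (Aw w) L})" by (auto intro: bdd_belowI[of _ 0] vl_nonneg)
      show "bdd_below (vl I x ` {L. valid B L})" by (auto intro: bdd_belowI[of _ 0] vl_nonneg)
      show "\<forall>a\<in>vl I x ` {L. valid (Aw w) L}. \<forall>b\<in>vl I x ` {L. valid B L}.
          Inf (vl I' (x(i:=w)) ` {L. valid A L}) \<le> \<nu> * a + (1 - \<nu>) * b + (1 - \<nu>)\<^sup>2"
      proof (intro ballI, elim imageE)
        fix a b L1 L2 assume a: "a = vl I x L1" and L1: "L1 \<in> {L. valid (Aw w) L}"
          and b: "b = vl I x L2" and L2: "L2 \<in> {L. valid B L}"
        have "\<forall>p\<in>set L1. fst p \<ge> 0 \<and> (snd p)(i:=w) \<in> A"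
          using L1 unfolding valid_def Aw_def by auto
        moreover have "\<nu> * sum_list (map fst L1) = \<nu>" using L1 unfolding valid_def by simp
        ultimately have "FF I' A (x(i:=w)) \<le> \<nu> * vl I x L1 + (1-\<nu>) * vl I x L2 + (1-\<nu>)^2"
          using comb[OF iI finI nu _ _ _ ch, of L1 w L2 x] L2 unfolding I'_def by simp
        thus "Inf (vl I' (x(i:=w)) ` {L. valid A L}) \<le> \<nu> * a + (1 - \<nu>) * b + (1 - \<nu>)\<^sup>2"
          unfolding a b FF_def .
      qed
    qed
    have "T w \<le> (\<Sum>x\<in>Om U I. Wt q I x * (exp ((1-\<nu>)^2/4) *
          exp (\<nu> * (FF I (Aw w) x / 4) + (1-\<nu>) * (FF I B x / 4))))"
      unfolding T_def
    proof (intro sum_mono mult_left_mono)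
      fix x assume "x \<in> Om U I"
      thus "0 \<le> Wt q I x" by (rule Wt_nonneg[OF qn])
      have "FF I' A (x(i:=w)) / 4 \<le> (1-\<nu>)^2/4 + (\<nu> * (FF I (Aw w) x / 4) + (1-\<nu>) * (FF I B x / 4))"
        using pt[of x] by (simp add: field_simps)
      hence "exp (FF I' A (x(i:=w)) / 4) \<le> exp ((1-\<nu>)^2/4 + (\<nu> * (FF I (Aw w) x / 4) + (1-\<nu>) * (FF I B x / 4)))"
        by simp
      thus "exp (FF I' A (x(i:=w)) / 4) \<le> exp ((1-\<nu>)^2/4) *
          exp (\<nu> * (FF I (Aw w) x / 4) + (1-\<nu>) * (FF I B x / 4))" by (simp add: exp_add)
    qed
    also have "\<dots> = exp ((1-\<nu>)^2/4) * (\<Sum>x\<in>Om U I. Wt q I x *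
          exp (\<nu> * (FF I (Aw w) x / 4) + (1-\<nu>) * (FF I B x / 4)))"
      by (simp add: sum_distrib_left algebra_simps)
    also have "\<dots> \<le> exp ((1-\<nu>)^2/4) * exp (\<nu> * ln SA + (1-\<nu>) * ln SB)"
      unfolding SA_def SB_def
      by (intro mult_left_mono holder_exp finO nu) (use Wt_nonneg[OF qn] SA1 SB1 in \<open>auto simp: SA_def SB_def\<close>)
    also have "\<dots> \<le> exp ((1-\<nu>)^2/4) * exp (\<nu> * (- ln Pa) + (1-\<nu>) * (- ln PB))"
    proof -
      have "ln SA \<le> - ln Pa" using SA SA1 Pa by (metis ln_inverse ln_le_cancel_iff inverse_eq_divide less_le_trans zero_less_one)
      moreover have "ln SB \<le> - ln PB" using SB SB1 PB by (metis ln_inverse ln_le_cancel_iff inverse_eq_divide less_le_trans zero_less_one)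
      ultimately have "\<nu> * ln SA + (1-\<nu>) * ln SB \<le> \<nu> * (- ln Pa) + (1-\<nu>) * (- ln PB)"
        using nu by (intro add_mono mult_left_mono) auto
      thus ?thesis by simp
    qed
    also have "\<dots> = exp ((1-\<nu>)^2/4 - \<nu> * ln Pa - (1-\<nu>) * ln PB)"
      by (simp add: exp_add[symmetric] algebra_simps)
    also have "\<dots> \<le> (2 - Pa/PB) / PB"
      by (rule num2[OF Pa PaB r \<nu>_def])
    finally show ?thesis unfolding Pa_def .
  qed
  have "(\<Sum>x\<in>Om U I'. Wt q I' x * exp (FF I' A x / 4)) = (\<Sum>w\<in>U. q w * T w)"
    unfolding I'_def T_def sum_Om_insert[OF iI] sum_distrib_left
    by (intro sum.cong refl) (simp add: Wt_upd[OF iI finI])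
  also have "\<dots> \<le> (\<Sum>w\<in>U. q w * ((2 - Pr q I (Aw w) / PB) / PB))"
    using Tb qn by (intro sum_mono mult_left_mono) auto
  also have "\<dots> = (2 - Pr q I' A / PB) / PB"
    unfolding PAeq using qs
    by (simp add: sum_distrib_left sum_divide_distrib[symmetric] sum_subtractf algebra_simps diff_divide_distrib
        sum_distrib_right[symmetric])
  finally have S: "(\<Sum>x\<in>Om U I'. Wt q I' x * exp (FF I' A x / 4)) \<le> (2 - Pr q I' A / PB) / PB" .
  have "Pr q I' A * (\<Sum>x\<in>Om U I'. Wt q I' x * exp (FF I' A x / 4)) \<le> Pr q I' A * ((2 - Pr q I' A / PB) / PB)"
    using S PA by (intro mult_left_mono) auto
  also have "\<dots> = 1 - (1 - Pr q I' A / PB)^2"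
    using PB by (simp add: power2_eq_square field_simps)
  also have "\<dots> \<le> 1" by simp
  finally show ?case unfolding I'_def .
qed



lemma sum_zc:
  "(\<Sum>j\<in>J. \<alpha> j * zc x L j) =
   sum_list (map (\<lambda>p. fst p * (\<Sum>j\<in>J. \<alpha> j * (if x j \<noteq> snd p j then 1 else 0))) L)"
  unfolding zc_def
  by (induction L) (auto simp: sum.distrib sum_distrib_left algebra_simps)

lemma sum_list_ge:
  fixes M :: real
  assumes "\<forall>p\<in>set L. fst p \<ge> 0 \<and> M \<le> g p"
  shows "M * sum_list (map fst L) \<le> sum_list (map (\<lambda>p. fst p * g p) L)"
  using assms
proof (induction L)
  case (Cons p L)
  hence "fst p * M \<le> fst p * g p" by (intro mult_left_mono) auto
  thus ?case using Cons by (simp add: algebra_simps)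
qed simp

lemma cd_le:
  fixes x :: "nat \<Rightarrow> 'a"
  assumes finA: "finite A" and ne: "A \<noteq> {}" and L: "valid A L"
  shows "convex_dist m x A \<le> ereal (sqrt (vl {..<m} x L))"
  unfolding convex_dist_def
proof (rule SUP_least)
  fix \<alpha> :: "nat \<Rightarrow> real" assume "\<alpha> \<in> {\<alpha>. (\<forall>j<m. 0 \<le> \<alpha> j) \<and> (\<Sum>j<m. (\<alpha> j)\<^sup>2) \<le> 1}"
  hence a2: "(\<Sum>j<m. (\<alpha> j)\<^sup>2) \<le> 1" by simp
  define g where "g y = (\<Sum>j<m. \<alpha> j * (if x j \<noteq> y j then 1 else 0))" for y :: "nat \<Rightarrow> 'a"
  define M where "M = Min (g ` A)"
  have "M \<in> g ` A" unfolding M_def using finA ne by (intro Min_in) auto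
  then obtain y0 where y0: "y0 \<in> A" "M = g y0" by auto
  have Mle: "y \<in> A \<Longrightarrow> M \<le> g y" for y unfolding M_def using finA by (intro Min_le) auto
  have "(INF y\<in>A. ereal (\<Sum>j<m. \<alpha> j * (if x j \<noteq> y j then 1 else 0))) \<le> ereal (g y0)"
    unfolding g_def by (rule INF_lower) (rule y0)
  also have "g y0 \<le> (\<Sum>j<m. \<alpha> j * zc x L j)"
  proof -
    have "M * sum_list (map fst L) \<le> sum_list (map (\<lambda>p. fst p * g (snd p)) L)"
      using L Mle unfolding valid_def by (intro sum_list_ge) auto
    thus ?thesis using L y0 unfolding sum_zc g_def valid_def by simp
  qed
  also have "(\<Sum>j<m. \<alpha> j * zc x L j) \<le> sqrt (vl {..<m} x L)"
  proof -
    have "(\<Sum>j<m. \<alpha> j * zc x L j)^2 \<le> (\<Sum>j<m. (\<alpha> j)^2) * (\<Sum>j<m. (zc x L j)^2)"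
      by (rule Cauchy_Schwarz_ineq_sum)
    also have "\<dots> \<le> 1 * (\<Sum>j<m. (zc x L j)^2)"
      using a2 by (intro mult_right_mono sum_nonneg) auto
    finally have "(\<Sum>j<m. \<alpha> j * zc x L j)^2 \<le> vl {..<m} x L" unfolding vl_def by simp
    hence "sqrt ((\<Sum>j<m. \<alpha> j * zc x L j)^2) \<le> sqrt (vl {..<m} x L)" by (rule real_sqrt_le_mono)
    thus ?thesis by simp
  qed
  finally show "(INF y\<in>A. ereal (\<Sum>j<m. \<alpha> j * (if x j \<noteq> y j then 1 else 0))) \<le> ereal (sqrt (vl {..<m} x L))"
    by simp
qed

lemma final_step:
  fixes U :: "'a set" and q :: "'a \<Rightarrow> real" and A :: "(nat \<Rightarrow> 'a) set"
  assumes finU: "finite U" and qn: "\<forall>u\<in>U. q u \<ge> 0" and qs: "(\<Sum>u\<in>U. q u) = 1"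
    and AO: "A \<subseteq> cube U m" and PA: "prodprob q m A \<ge> 9/10" and s: "s > 0"
    and C: "C = {x \<in> cube U m. convex_dist m x A < ereal s}"
  shows "prodprob q m C \<ge> 1 - 10/9 * exp (- (s^2) / 4)"
proof -
  define I where "I = {..<m}"
  have cube: "cube U m = Om U I" unfolding cube_def Om_def I_def by simp
  have pp: "prodprob q m S = Pr q I S" for S unfolding prodprob_def Pr_def Wt_def I_def by simp
  have finI: "finite I" unfolding I_def by simp
  have finO: "finite (Om U I)" by (rule finite_Om[OF finU finI])
  have PA': "Pr q I A \<ge> 9/10" using PA pp by simp
  have Ane: "A \<noteq> {}" using PA' Pr_ne[of q I A] by auto
  have finA: "finite A" using AO finO cube by (metis finite_subset)
  define S where "S = (\<Sum>x\<in>Om U I. Wt q I x * exp (FF I A x / 4))"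
  have T: "Pr q I A * S \<le> 1" unfolding S_def
    by (rule talagrand[OF finU qn qs finI]) (use AO cube PA' in auto)
  have S: "S \<le> 10/9"
  proof -
    have "S \<ge> 0" unfolding S_def using Wt_nonneg[OF qn] by (intro sum_nonneg) auto
    hence "9/10 * S \<le> Pr q I A * S" using PA' by (intro mult_right_mono) auto
    thus ?thesis using T by linarith
  qed
  define D where "D = Om U I - C"
  have DO: "D \<subseteq> Om U I" unfolding D_def by auto
  have FD: "x \<in> D \<Longrightarrow> s^2 \<le> FF I A x" for x
  proof (rule FF_ge[OF Ane])
    fix L assume L: "valid A L" and x: "x \<in> D"
    have "ereal s \<le> convex_dist m x A" using x unfolding D_def C cube by auto
    also have "\<dots> \<le> ereal (sqrt (vl {..<m} x L))" by (rule cd_le[OF finA Ane L])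
    finally have "s \<le> sqrt (vl I x L)" unfolding I_def by simp
    hence "s^2 \<le> (sqrt (vl I x L))^2" using s by (intro power_mono) auto
    thus "s^2 \<le> vl I x L" using vl_nonneg[of I x L] by simp
  qed
  have "Pr q I D * exp (s^2/4) = (\<Sum>x\<in>D. Wt q I x * exp (s^2/4))"
    unfolding Pr_def by (simp add: sum_distrib_right)
  also have "\<dots> \<le> (\<Sum>x\<in>D. Wt q I x * exp (FF I A x / 4))"
    using FD DO Wt_nonneg[OF qn] by (intro sum_mono mult_left_mono) (auto simp: divide_right_mono)
  also have "\<dots> \<le> S" unfolding S_def
    using DO finO Wt_nonneg[OF qn] by (intro sum_mono2) auto
  finally have "Pr q I D * exp (s^2/4) \<le> 10/9" using S by simp
  hence PD: "Pr q I D \<le> 10/9 * exp (- (s^2) / 4)"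
    by (simp add: exp_minus field_simps)
  have "Pr q I (Om U I) = 1" unfolding Pr_def by (rule sum_Wt[OF finU finI qs])
  moreover have "Pr q I (Om U I) = Pr q I C + Pr q I D"
  proof -
    have "C \<subseteq> Om U I" unfolding C cube by auto
    thus ?thesis unfolding Pr_def D_def using finO
      by (metis sum.subset_diff add.commute)
  qed
  ultimately show ?thesis using PD pp by simp
qed



lemma E_fin:
  assumes finU: "finite U" and finI: "finite I" and qs: "(\<Sum>u\<in>U. q u) = 1" and J: "J \<subseteq> I"
  shows "(\<Sum>x\<in>Om U I. Wt q I x * (\<Prod>t\<in>J. g t (x t))) = (\<Prod>t\<in>J. \<Sum>u\<in>U. q u * g t u)"
proof -
  define g' where "g' t u = (if t \<in> J then q u * g t u else q u)" for t u
  have IJ: "I \<inter> J = J" using J by auto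
  have "(\<Prod>t\<in>I. \<Sum>u\<in>U. g' t u) = (\<Sum>x\<in>Om U I. \<Prod>t\<in>I. g' t (x t))"
    unfolding Om_def by (rule prod_sum_PiE) (use finI finU in auto)
  also have "\<dots> = (\<Sum>x\<in>Om U I. Wt q I x * (\<Prod>t\<in>J. g t (x t)))"
  proof (rule sum.cong[OF refl])
    fix x
    have "(\<Prod>t\<in>I. g' t (x t)) = (\<Prod>t\<in>I. q (x t) * (if t \<in> J then g t (x t) else 1))"
      unfolding g'_def by (intro prod.cong) auto
    also have "\<dots> = Wt q I x * (\<Prod>t\<in>I. (if t \<in> J then g t (x t) else 1))"
      unfolding Wt_def by (rule prod.distrib)
    also have "(\<Prod>t\<in>I. (if t \<in> J then g t (x t) else 1)) = (\<Prod>t\<in>J. g t (x t))"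
      using prod.inter_restrict[OF finI, of "\<lambda>t. g t (x t)" J] IJ by simp
    finally show "(\<Prod>t\<in>I. g' t (x t)) = Wt q I x * (\<Prod>t\<in>J. g t (x t))" .
  qed
  finally have 1: "(\<Prod>t\<in>I. \<Sum>u\<in>U. g' t u) = (\<Sum>x\<in>Om U I. Wt q I x * (\<Prod>t\<in>J. g t (x t)))" .
  have "(\<Prod>t\<in>I. \<Sum>u\<in>U. g' t u) = (\<Prod>t\<in>I. if t \<in> J then (\<Sum>u\<in>U. q u * g t u) else 1)"
    unfolding g'_def using qs by (intro prod.cong) auto
  also have "\<dots> = (\<Prod>t\<in>J. \<Sum>u\<in>U. q u * g t u)"
    using prod.inter_restrict[OF finI, of "\<lambda>t. \<Sum>u\<in>U. q u * g t u" J] IJ by simp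
  finally show ?thesis using 1 by simp
qed

locale chb =
  fixes U :: "'a set" and q :: "'a \<Rightarrow> real" and h :: "'a \<Rightarrow> nat" and n m :: nat
  assumes finU: "finite U" and qn: "\<forall>u\<in>U. q u \<ge> 0" and qs: "(\<Sum>u\<in>U. q u) = 1"
    and hr: "\<forall>u\<in>U. h u \<in> {1..n}"
begin

definition EE :: "((nat \<Rightarrow> 'a) \<Rightarrow> real) \<Rightarrow> real" where
  "EE f = (\<Sum>x\<in>Om U {..<m}. Wt q {..<m} x * f x)"
definition ee :: "nat \<Rightarrow> 'a \<Rightarrow> real" where
  "ee i u = (if h u = i then 1 else 0)"
definition XX :: "(nat \<Rightarrow> 'a) \<Rightarrow> nat \<Rightarrow> nat \<Rightarrow> real" where
  "XX x j l = (if h (x j) = h (x l) then 1 else 0)"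
definition pb :: "nat \<Rightarrow> real" where "pb i = bucket_prob U q h i"
definition S2 :: real where "S2 = (\<Sum>i=1..n. (pb i)^2)"
definition S3 :: real where "S3 = (\<Sum>i=1..n. (pb i)^3)"

lemma pb_ee: "pb i = (\<Sum>u\<in>U. q u * ee i u)"
  unfolding pb_def bucket_prob_def ee_def using finU
  by (simp add: sum.inter_filter[symmetric] if_distrib cong: if_cong)

lemma pb_nonneg: "pb i \<ge> 0"
  unfolding pb_def bucket_prob_def using qn by (intro sum_nonneg) auto

lemma pb_sum: "(\<Sum>i=1..n. pb i) = 1"
proof -
  have "(\<Sum>i=1..n. pb i) = (\<Sum>u\<in>U. \<Sum>i=1..n. q u * ee i u)"
    unfolding pb_ee by (rule sum.swap)
  also have "\<dots> = (\<Sum>u\<in>U. q u)"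
    using hr by (intro sum.cong refl) (auto simp: ee_def if_distrib cong: if_cong)
  finally show ?thesis using qs by simp
qed

lemma E_prod: "J \<subseteq> {..<m} \<Longrightarrow> EE (\<lambda>x. \<Prod>t\<in>J. g t (x t)) = (\<Prod>t\<in>J. \<Sum>u\<in>U. q u * g t u)"
  unfolding EE_def by (rule E_fin[OF finU _ qs]) auto

lemma E_sum: "finite K \<Longrightarrow> EE (\<lambda>x. \<Sum>a\<in>K. f a x) = (\<Sum>a\<in>K. EE (f a))"
  unfolding EE_def by (simp add: sum_distrib_left sum.swap[of _ K])

lemma E_cong: "(\<And>x. x \<in> Om U {..<m} \<Longrightarrow> f x = g x) \<Longrightarrow> EE f = EE g"
  unfolding EE_def by (intro sum.cong) auto

lemma hx: "x \<in> Om U {..<m} \<Longrightarrow> j < m \<Longrightarrow> h (x j) \<in> {1..n}"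
  using hr unfolding Om_def by (auto simp: PiE_iff)

lemma ee2: assumes "h a \<in> {1..n}"
  shows "(\<Sum>i=1..n. ee i a * ee i b) = (if h a = h b then 1 else 0)"
proof -
  have "(\<Sum>i=1..n. ee i a * ee i b) = (\<Sum>i\<in>{1..n}. if i = h a then (if h a = h b then 1 else 0) else 0)"
    by (intro sum.cong refl) (auto simp: ee_def)
  also have "\<dots> = (if h a = h b then 1 else 0)" using assms by (subst sum.delta) simp_all
  finally show ?thesis .
qed

lemma ee3: assumes "h a \<in> {1..n}"
  shows "(\<Sum>i=1..n. ee i a * ee i b * ee i c) = (if h a = h b then 1 else 0) * (if h a = h c then 1 else 0)"
proof -
  have "(\<Sum>i=1..n. ee i a * ee i b * ee i c) =
     (\<Sum>i\<in>{1..n}. if i = h a then (if h a = h b then 1 else 0) * (if h a = h c then 1 else 0) else 0)"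
    by (intro sum.cong refl) (auto simp: ee_def)
  also have "\<dots> = (if h a = h b then 1 else 0) * (if h a = h c then 1 else 0)"
    using assms by (subst sum.delta) simp_all
  finally show ?thesis .
qed

lemma XX_sum2: "x \<in> Om U {..<m} \<Longrightarrow> j < m \<Longrightarrow> XX x j l = (\<Sum>i=1..n. ee i (x j) * ee i (x l))"
  using ee2[OF hx[of x j]] unfolding XX_def by simp

lemma XX_sum3: "x \<in> Om U {..<m} \<Longrightarrow> j < m \<Longrightarrow>
   XX x j l * XX x j l' = (\<Sum>i=1..n. ee i (x j) * ee i (x l) * ee i (x l'))"
  using ee3[OF hx[of x j]] unfolding XX_def by simp

lemma XX_sum4: "x \<in> Om U {..<m} \<Longrightarrow> j < m \<Longrightarrow> j' < m \<Longrightarrow>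
   XX x j l * XX x j' l' = (\<Sum>i=1..n. \<Sum>i'=1..n. ee i (x j) * ee i (x l) * ee i' (x j') * ee i' (x l'))"
  by (simp add: XX_sum2 sum_product algebra_simps)

lemma EX: assumes "j < m" "l < m" "j \<noteq> l" shows "EE (\<lambda>x. XX x j l) = S2"
proof -
  have "EE (\<lambda>x. XX x j l) = EE (\<lambda>x. \<Sum>i=1..n. \<Prod>t\<in>{j,l}. ee i (x t))"
    using assms by (intro E_cong) (simp add: XX_sum2)
  also have "\<dots> = (\<Sum>i=1..n. EE (\<lambda>x. \<Prod>t\<in>{j,l}. ee i (x t)))"
    by (rule E_sum) simp
  also have "\<dots> = (\<Sum>i=1..n. \<Prod>t\<in>{j,l}. pb i)"
  proof (intro sum.cong refl)
    fix i
    have "EE (\<lambda>x. \<Prod>t\<in>{j,l}. ee i (x t)) = (\<Prod>t\<in>{j,l}. \<Sum>u\<in>U. q u * ee i u)"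
      by (rule E_prod) (use assms in auto)
    thus "EE (\<lambda>x. \<Prod>t\<in>{j,l}. ee i (x t)) = (\<Prod>t\<in>{j,l}. pb i)" by (simp only: pb_ee)
  qed
  also have "\<dots> = S2" unfolding S2_def using assms by (simp add: power2_eq_square)
  finally show ?thesis .
qed

lemma EXX3: assumes "j < m" "l < m" "l' < m" "j \<noteq> l" "j \<noteq> l'" "l \<noteq> l'"
  shows "EE (\<lambda>x. XX x j l * XX x j l') = S3"
proof -
  have "EE (\<lambda>x. XX x j l * XX x j l') = EE (\<lambda>x. \<Sum>i=1..n. \<Prod>t\<in>{j,l,l'}. ee i (x t))"
    using assms by (intro E_cong) (simp add: XX_sum3 algebra_simps)
  also have "\<dots> = (\<Sum>i=1..n. EE (\<lambda>x. \<Prod>t\<in>{j,l,l'}. ee i (x t)))"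
    by (rule E_sum) simp
  also have "\<dots> = (\<Sum>i=1..n. \<Prod>t\<in>{j,l,l'}. pb i)"
  proof (intro sum.cong refl)
    fix i
    have "EE (\<lambda>x. \<Prod>t\<in>{j,l,l'}. ee i (x t)) = (\<Prod>t\<in>{j,l,l'}. \<Sum>u\<in>U. q u * ee i u)"
      by (rule E_prod) (use assms in auto)
    thus "EE (\<lambda>x. \<Prod>t\<in>{j,l,l'}. ee i (x t)) = (\<Prod>t\<in>{j,l,l'}. pb i)" by (simp only: pb_ee)
  qed
  also have "\<dots> = S3" unfolding S3_def using assms by (simp add: eval_nat_numeral)
  finally show ?thesis .
qed

lemma EXX4: assumes "j < m" "l < m" "j' < m" "l' < m" "distinct [j, l, j', l']"
  shows "EE (\<lambda>x. XX x j l * XX x j' l') = S2^2"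
proof -
  have "EE (\<lambda>x. XX x j l * XX x j' l') =
     EE (\<lambda>x. \<Sum>i=1..n. \<Sum>i'=1..n. \<Prod>t\<in>{j,l,j',l'}. (if t \<in> {j,l} then ee i else ee i') (x t))"
  proof (rule E_cong)
    fix x assume x: "x \<in> Om U {..<m}"
    have p4: "(\<Prod>t\<in>{j,l,j',l'}. F t) = F j * F l * F j' * F l'" for F :: "nat \<Rightarrow> real"
      using assms(5) by (simp add: algebra_simps)
    show "XX x j l * XX x j' l' =
      (\<Sum>i=1..n. \<Sum>i'=1..n. \<Prod>t\<in>{j,l,j',l'}. (if t \<in> {j,l} then ee i else ee i') (x t))"
      unfolding p4 XX_sum4[OF x assms(1,3)] using assms(5) by simp
  qed
  also have "\<dots> = (\<Sum>i=1..n. \<Sum>i'=1..n. EE (\<lambda>x. \<Prod>t\<in>{j,l,j',l'}. (if t \<in> {j,l} then ee i else ee i') (x t)))"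
    by (simp only: E_sum finite_atLeastAtMost)
  also have "\<dots> = (\<Sum>i=1..n. \<Sum>i'=1..n. \<Prod>t\<in>{j,l,j',l'}. (if t \<in> {j,l} then pb i else pb i'))"
  proof (intro sum.cong refl)
    fix i i'
    have "EE (\<lambda>x. \<Prod>t\<in>{j,l,j',l'}. (if t \<in> {j,l} then ee i else ee i') (x t)) =
       (\<Prod>t\<in>{j,l,j',l'}. \<Sum>u\<in>U. q u * (if t \<in> {j,l} then ee i else ee i') u)"
      by (rule E_prod) (use assms in auto)
    also have "\<dots> = (\<Prod>t\<in>{j,l,j',l'}. (if t \<in> {j,l} then pb i else pb i'))"
      by (intro prod.cong refl) (simp add: pb_ee)
    finally show "EE (\<lambda>x. \<Prod>t\<in>{j,l,j',l'}. (if t \<in> {j,l} then ee i else ee i') (x t)) =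
       (\<Prod>t\<in>{j,l,j',l'}. (if t \<in> {j,l} then pb i else pb i'))" .
  qed
  also have "\<dots> = (\<Sum>i=1..n. \<Sum>i'=1..n. (pb i)^2 * (pb i')^2)"
  proof -
    have p4: "(\<Prod>t\<in>{j,l,j',l'}. F t) = F j * F l * F j' * F l'" for F :: "nat \<Rightarrow> real"
      using assms(5) by (simp add: algebra_simps)
    show ?thesis unfolding p4 using assms(5) by (simp add: power2_eq_square mult.assoc)
  qed
  also have "\<dots> = S2^2" unfolding S2_def by (simp add: power2_eq_square sum_product)
  finally show ?thesis .
qed

end


context chb begin

definition PP :: "(nat \<times> nat) set" where "PP = {..<m} \<times> {..<m}"
definition YY :: "(nat \<Rightarrow> 'a) \<Rightarrow> nat \<times> nat \<Rightarrow> real" where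
  "YY x p = (if fst p \<noteq> snd p then XX x (fst p) (snd p) - S2 else 0)"
definition cc :: "nat \<times> nat \<Rightarrow> nat \<times> nat \<Rightarrow> real" where
  "cc p p' = ((if fst p' = fst p then 1 else 0) + (if fst p' = snd p then 1 else 0)
     + (if snd p' = fst p then 1 else 0) + (if snd p' = snd p then 1 else 0)) * S3
   + ((if p' = p then 1 else 0) + (if p' = (snd p, fst p) then 1 else 0)) * S2"

lemma S2_nonneg: "S2 \<ge> 0" unfolding S2_def by (intro sum_nonneg) auto
lemma S3_nonneg: "S3 \<ge> 0" unfolding S3_def using pb_nonneg by (intro sum_nonneg) auto
lemma cc_nonneg: "cc p p' \<ge> 0"
  unfolding cc_def using S2_nonneg S3_nonneg by (intro add_nonneg_nonneg mult_nonneg_nonneg) auto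

lemma E1: "EE (\<lambda>_. 1) = 1"
  unfolding EE_def using sum_Wt[OF finU _ qs, of "{..<m}"] by simp

lemma E_lin: "EE (\<lambda>x. (f x - a) * (g x - a)) = EE (\<lambda>x. f x * g x) - a * EE f - a * EE g + a^2 * EE (\<lambda>_. 1)"
  unfolding EE_def by (simp add: sum_subtractf sum.distrib sum_distrib_left algebra_simps power2_eq_square)

lemma E_mono: "(\<And>x. x \<in> Om U {..<m} \<Longrightarrow> f x \<le> g x) \<Longrightarrow> EE f \<le> EE g"
  unfolding EE_def using Wt_nonneg[OF qn] by (intro sum_mono mult_left_mono) auto

lemma E_zero: "EE (\<lambda>_. 0) = 0" unfolding EE_def by simp

lemma XX_sym: "XX x a b = XX x b a" unfolding XX_def by (simp add: eq_commute)

lemma EXX_le: "j < m \<Longrightarrow> l < m \<Longrightarrow> j \<noteq> l \<Longrightarrow> EE (\<lambda>x. XX x j l * XX x j' l') \<le> S2"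
proof -
  assume a: "j < m" "l < m" "j \<noteq> l"
  have "EE (\<lambda>x. XX x j l * XX x j' l') \<le> EE (\<lambda>x. XX x j l)"
    by (rule E_mono) (simp add: XX_def)
  thus ?thesis using EX[OF a] by simp
qed

lemma cc_S2: assumes "p' = p \<or> p' = (snd p, fst p)" shows "S2 \<le> cc p p'"
proof -
  define a :: real where "a = (if fst p' = fst p then 1 else 0) + (if fst p' = snd p then 1 else 0)
     + (if snd p' = fst p then 1 else 0) + (if snd p' = snd p then 1 else 0)"
  define b :: real where "b = (if p' = p then 1 else 0) + (if p' = (snd p, fst p) then 1 else 0)"
  have a: "a \<ge> 0" unfolding a_def by simp
  have b: "b \<ge> 1" unfolding b_def using assms by (elim disjE) simp_all
  have "cc p p' = a * S3 + b * S2" unfolding cc_def a_def b_def by simp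
  moreover have "a * S3 \<ge> 0" using a S3_nonneg by simp
  moreover have "b * S2 \<ge> 1 * S2" using b S2_nonneg by (intro mult_right_mono) auto
  ultimately show ?thesis by simp
qed

lemma cc_S3: assumes "fst p' = fst p \<or> fst p' = snd p \<or> snd p' = fst p \<or> snd p' = snd p"
  shows "S3 \<le> cc p p'"
proof -
  define a :: real where "a = (if fst p' = fst p then 1 else 0) + (if fst p' = snd p then 1 else 0)
     + (if snd p' = fst p then 1 else 0) + (if snd p' = snd p then 1 else 0)"
  define b :: real where "b = (if p' = p then 1 else 0) + (if p' = (snd p, fst p) then 1 else 0)"
  have b: "b \<ge> 0" unfolding b_def by simp
  have a: "a \<ge> 1" unfolding a_def using assms by (elim disjE) simp_all
  have "cc p p' = a * S3 + b * S2" unfolding cc_def a_def b_def by simp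
  moreover have "b * S2 \<ge> 0" using b S2_nonneg by simp
  moreover have "a * S3 \<ge> 1 * S3" using a S3_nonneg by (intro mult_right_mono) auto
  ultimately show ?thesis by simp
qed

lemma EYY: assumes p: "p \<in> PP" and p': "p' \<in> PP"
  shows "EE (\<lambda>x. YY x p * YY x p') \<le> (if fst p \<noteq> snd p then cc p p' else 0)"
proof -
  obtain j l where pj: "p = (j,l)" by (cases p)
  obtain j' l' where pj': "p' = (j',l')" by (cases p')
  have jl: "j < m" "l < m" "j' < m" "l' < m" using p p' pj pj' unfolding PP_def by auto
  show ?thesis
  proof (cases "j \<noteq> l \<and> j' \<noteq> l'")
    case False
    hence "EE (\<lambda>x. YY x p * YY x p') = EE (\<lambda>_. 0)"
      unfolding YY_def pj pj' by (intro E_cong) auto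
    thus ?thesis using cc_nonneg E_zero by simp
  next
    case True
    have "EE (\<lambda>x. YY x p * YY x p') = EE (\<lambda>x. (XX x j l - S2) * (XX x j' l' - S2))"
      unfolding YY_def pj pj' using True by simp
    also have "\<dots> = EE (\<lambda>x. XX x j l * XX x j' l') - S2^2"
      unfolding E_lin E1 using EX[of j l] EX[of j' l'] True jl by (simp add: power2_eq_square)
    finally have e: "EE (\<lambda>x. YY x p * YY x p') = EE (\<lambda>x. XX x j l * XX x j' l') - S2^2" .
    have S22: "S2^2 \<ge> 0" by simp
    have "EE (\<lambda>x. XX x j l * XX x j' l') - S2^2 \<le> cc p p'"
    proof -
      consider (s1) "j' = j" "l' = l" | (s2) "j' = l" "l' = j" | (a) "j' = j" "l' \<noteq> l"
        | (b) "j' = l" "l' \<noteq> j" | (c) "l' = j" "j' \<noteq> l" | (d) "l' = l" "j' \<noteq> j"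
        | (e) "j' \<noteq> j" "j' \<noteq> l" "l' \<noteq> j" "l' \<noteq> l" by blast
      thus ?thesis
      proof cases
        case s1
        have "S2 \<le> cc p p'" by (rule cc_S2) (simp add: pj pj' s1)
        thus ?thesis using EXX_le[of j l j' l'] jl True S22 by linarith
      next
        case s2
        have "S2 \<le> cc p p'" by (rule cc_S2) (simp add: pj pj' s2)
        thus ?thesis using EXX_le[of j l j' l'] jl True S22 by linarith
      next
        case a
        have "S3 \<le> cc p p'" by (rule cc_S3) (simp add: pj pj' a)
        moreover have "EE (\<lambda>x. XX x j l * XX x j' l') = S3"
          using EXX3[of j l l'] jl True a by simp
        ultimately show ?thesis using S22 by linarith
      next
        case b
        have "S3 \<le> cc p p'" by (rule cc_S3) (simp add: pj pj' b)
        moreover have "EE (\<lambda>x. XX x j l * XX x j' l') = EE (\<lambda>x. XX x l j * XX x l l')"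
          using b XX_sym[of _ j l] by simp
        moreover have "EE (\<lambda>x. XX x l j * XX x l l') = S3"
          using EXX3[of l j l'] jl True b by simp
        ultimately show ?thesis using S22 by linarith
      next
        case c
        have "S3 \<le> cc p p'" by (rule cc_S3) (simp add: pj pj' c)
        moreover have "EE (\<lambda>x. XX x j l * XX x j' l') = EE (\<lambda>x. XX x j l * XX x j j')"
          using c XX_sym[of _ j' j] by simp
        moreover have "EE (\<lambda>x. XX x j l * XX x j j') = S3"
          using EXX3[of j l j'] jl True c by simp
        ultimately show ?thesis using S22 by linarith
      next
        case d
        have "S3 \<le> cc p p'" by (rule cc_S3) (simp add: pj pj' d)
        moreover have "EE (\<lambda>x. XX x j l * XX x j' l') = EE (\<lambda>x. XX x l j * XX x l j')"
          using d XX_sym[of _ j l] XX_sym[of _ j' l] by simp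
        moreover have "EE (\<lambda>x. XX x l j * XX x l j') = S3"
          using EXX3[of l j j'] jl True d by simp
        ultimately show ?thesis using S22 by linarith
      next
        case e
        have "distinct [j, l, j', l']" using e True by simp
        hence "EE (\<lambda>x. XX x j l * XX x j' l') = S2^2" using EXX4 jl by simp
        thus ?thesis using cc_nonneg[of p p'] by linarith
      qed
    qed
    thus ?thesis using e True pj by simp
  qed
qed

lemma sum_PP: "(\<Sum>p\<in>PP. g (fst p) (snd p)) = (\<Sum>j<m. \<Sum>l<m. (g j l :: real))"
  unfolding PP_def by (simp add: sum.cartesian_product split_def)

lemma sum_cc: assumes "p \<in> PP" shows "(\<Sum>p'\<in>PP. cc p p') = 4 * real m * S3 + 2 * S2"
proof -
  obtain j l where pj: "p = (j,l)" by (cases p)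
  have jl: "j < m" "l < m" using assms pj unfolding PP_def by auto
  have d: "(\<Sum>p'\<in>PP. if fst p' = a then 1 else 0) = real m" if "a < m" for a
    using sum_PP[of "\<lambda>j l. if j = a then 1 else 0"] that by (simp add: sum_distrib_left[symmetric])
  have d2: "(\<Sum>p'\<in>PP. if snd p' = a then 1 else 0) = real m" if "a < m" for a
    using sum_PP[of "\<lambda>j l. if l = a then 1 else 0"] that by simp
  have s: "(\<Sum>p'\<in>PP. if p' = b then 1 else 0) = (1::real)" if "b \<in> PP" for b
    using that unfolding PP_def by (simp add: sum.delta')
  have fin: "finite PP" unfolding PP_def by simp
  have "(\<Sum>p'\<in>PP. cc p p') = ((\<Sum>p'\<in>PP. if fst p' = j then 1 else 0) + (\<Sum>p'\<in>PP. if fst p' = l then 1 else 0)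
     + (\<Sum>p'\<in>PP. if snd p' = j then 1 else 0) + (\<Sum>p'\<in>PP. if snd p' = l then 1 else 0)) * S3
     + ((\<Sum>p'\<in>PP. if p' = (j,l) then 1 else 0) + (\<Sum>p'\<in>PP. if p' = (l,j) then 1 else 0)) * S2"
    unfolding cc_def pj by (simp only: sum.distrib sum_distrib_right[symmetric] fst_conv snd_conv)
  also have "\<dots> = 4 * real m * S3 + 2 * S2"
    using d[OF jl(1)] d[OF jl(2)] d2[OF jl(1)] d2[OF jl(2)] s[of "(j,l)"] s[of "(l,j)"] jl
    unfolding PP_def by simp
  finally show ?thesis .
qed

lemma sum_offdiag: "(\<Sum>p\<in>PP. if fst p \<noteq> snd p then 1 else 0) = real m * (real m - 1)"
proof -
  have "(\<Sum>p\<in>PP. if fst p \<noteq> snd p then 1 else 0) = (\<Sum>j<m. \<Sum>l<m. (1::real) - (if l = j then 1 else 0))"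
    using sum_PP[of "\<lambda>j l. if j \<noteq> l then 1 else 0"] by simp (intro sum.cong refl, auto)
  also have "\<dots> = (\<Sum>j<m. real m - 1)" by (simp add: sum_subtractf)
  also have "\<dots> = real m * (real m - 1)" by simp
  finally show ?thesis .
qed

lemma var_bound: "EE (\<lambda>x. (\<Sum>p\<in>PP. YY x p)^2) \<le> real m * (real m - 1) * (4 * real m * S3 + 2 * S2)"
proof -
  have fin: "finite PP" unfolding PP_def by simp
  have "EE (\<lambda>x. (\<Sum>p\<in>PP. YY x p)^2) = EE (\<lambda>x. \<Sum>p\<in>PP. \<Sum>p'\<in>PP. YY x p * YY x p')"
    by (simp add: power2_eq_square sum_product)
  also have "\<dots> = (\<Sum>p\<in>PP. \<Sum>p'\<in>PP. EE (\<lambda>x. YY x p * YY x p'))"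
    using fin by (simp add: E_sum)
  also have "\<dots> \<le> (\<Sum>p\<in>PP. \<Sum>p'\<in>PP. if fst p \<noteq> snd p then cc p p' else 0)"
    by (intro sum_mono EYY)
  also have "\<dots> = (\<Sum>p\<in>PP. (if fst p \<noteq> snd p then 1 else 0) * (4 * real m * S3 + 2 * S2))"
    by (intro sum.cong refl) (auto simp: sum_cc)
  also have "\<dots> = real m * (real m - 1) * (4 * real m * S3 + 2 * S2)"
    by (simp only: sum_distrib_right[symmetric] sum_offdiag)
  finally show ?thesis .
qed

end


context chb begin

lemma ee01: "ee i u * ee i u = ee i u" unfolding ee_def by simp

lemma kcount_ee: "real (kcount h m x i) = (\<Sum>j<m. ee i (x j))"
proof -
  have "real (kcount h m x i) = (\<Sum>j\<in>{j\<in>{..<m}. h (x j) = i}. 1)"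
    unfolding kcount_def by simp
  also have "\<dots> = (\<Sum>j<m. ee i (x j))"
    unfolding ee_def by (subst sum.inter_filter) auto
  finally show ?thesis .
qed

lemma kk1: "real (kcount h m x i) * (real (kcount h m x i) - 1) =
    (\<Sum>j<m. \<Sum>l<m. if j \<noteq> l then ee i (x j) * ee i (x l) else 0)"
proof -
  have row: "(\<Sum>l<m. ee i (x j) * ee i (x l)) =
      (\<Sum>l<m. if j \<noteq> l then ee i (x j) * ee i (x l) else 0) + (if j < m then ee i (x j) else 0)" for j
  proof -
    have "(\<Sum>l<m. ee i (x j) * ee i (x l)) =
       (\<Sum>l<m. (if j \<noteq> l then ee i (x j) * ee i (x l) else 0) + (if l = j then ee i (x j) else 0))"
      by (intro sum.cong refl) (auto simp: ee01)
    also have "\<dots> = (\<Sum>l<m. if j \<noteq> l then ee i (x j) * ee i (x l) else 0) + (if j < m then ee i (x j) else 0)"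
      by (simp add: sum.distrib)
    finally show ?thesis .
  qed
  have "real (kcount h m x i) * (real (kcount h m x i) - 1) =
     (\<Sum>j<m. \<Sum>l<m. ee i (x j) * ee i (x l)) - (\<Sum>j<m. ee i (x j))"
    unfolding kcount_ee by (simp add: sum_product algebra_simps)
  also have "\<dots> = (\<Sum>j<m. \<Sum>l<m. if j \<noteq> l then ee i (x j) * ee i (x l) else 0)"
    unfolding row by (simp add: sum.distrib)
  finally show ?thesis .
qed

lemma kZ: assumes x: "x \<in> Om U {..<m}"
  shows "(\<Sum>i=1..n. real (kcount h m x i) * (real (kcount h m x i) - 1)) =
         (\<Sum>p\<in>PP. if fst p \<noteq> snd p then XX x (fst p) (snd p) else 0)"
proof -
  have "(\<Sum>i=1..n. real (kcount h m x i) * (real (kcount h m x i) - 1)) =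
     (\<Sum>i=1..n. \<Sum>j<m. \<Sum>l<m. if j \<noteq> l then ee i (x j) * ee i (x l) else 0)"
    by (simp only: kk1)
  also have "\<dots> = (\<Sum>j<m. \<Sum>l<m. \<Sum>i=1..n. if j \<noteq> l then ee i (x j) * ee i (x l) else 0)"
    by (simp only: sum.swap[of _ "{1..n}"])
  also have "\<dots> = (\<Sum>j<m. \<Sum>l<m. if j \<noteq> l then XX x j l else 0)"
    using XX_sum2[OF x] by (intro sum.cong refl) auto
  also have "\<dots> = (\<Sum>p\<in>PP. if fst p \<noteq> snd p then XX x (fst p) (snd p) else 0)"
    using sum_PP[of "\<lambda>j l. if j \<noteq> l then XX x j l else 0"] by simp
  finally show ?thesis .
qed

lemma sumY: "(\<Sum>p\<in>PP. YY x p) = (\<Sum>p\<in>PP. if fst p \<noteq> snd p then XX x (fst p) (snd p) else 0) - real m * (real m - 1) * S2"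
proof -
  have "(\<Sum>p\<in>PP. YY x p) = (\<Sum>p\<in>PP. (if fst p \<noteq> snd p then XX x (fst p) (snd p) else 0) - (if fst p \<noteq> snd p then 1 else 0) * S2)"
    unfolding YY_def by (intro sum.cong refl) auto
  also have "\<dots> = (\<Sum>p\<in>PP. if fst p \<noteq> snd p then XX x (fst p) (snd p) else 0) - real m * (real m - 1) * S2"
    by (simp only: sum_subtractf sum_distrib_right[symmetric] sum_offdiag)
  finally show ?thesis .
qed

lemma S2_ge: "1 \<le> real n * S2"
proof -
  have "(\<Sum>i=1..n. 1 * pb i)^2 \<le> (\<Sum>i=1..n. 1^2) * (\<Sum>i=1..n. (pb i)^2)"
    by (rule Cauchy_Schwarz_ineq_sum)
  thus ?thesis using pb_sum unfolding S2_def by simp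
qed

lemma S3_le: assumes n25: "n \<ge> 25" shows "S3 \<le> real n / 5 * S2^2"
proof -
  have c: "(pb i)^3 = pb i * (pb i)^2" for i by (simp add: power3_eq_cube power2_eq_square)
  have "S3^2 = (\<Sum>i=1..n. pb i * (pb i)^2)^2" unfolding S3_def by (simp only: c)
  also have "\<dots> \<le> (\<Sum>i=1..n. (pb i)^2) * (\<Sum>i=1..n. ((pb i)^2)^2)"
    by (rule Cauchy_Schwarz_ineq_sum)
  also have "(\<Sum>i=1..n. ((pb i)^2)^2) \<le> (\<Sum>i=1..n. (pb i)^2 * S2)"
  proof (rule sum_mono)
    fix i assume i: "i \<in> {1..n}"
    have "(pb i)^2 \<le> S2" unfolding S2_def using i by (intro member_le_sum) auto
    moreover have "(pb i)^2 \<ge> 0" by simp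
    ultimately have "(pb i)^2 * (pb i)^2 \<le> (pb i)^2 * S2" by (rule mult_left_mono)
    thus "((pb i)^2)^2 \<le> (pb i)^2 * S2" by (simp only: power2_eq_square)
  qed
  also have "(\<Sum>i=1..n. (pb i)^2 * S2) = S2 * S2" unfolding S2_def by (rule sum_distrib_right[symmetric])
  finally have "S3^2 \<le> (\<Sum>i=1..n. (pb i)^2) * (S2 * S2)"
    using S2_nonneg unfolding S2_def[symmetric] by (simp add: mult_left_mono)
  hence A: "S3^2 \<le> S2 * (S2 * S2)" unfolding S2_def[symmetric] .
  have B: "S2 * (S2 * S2) \<le> S2 * (S2 * S2) * (real n * S2)"
    using mult_left_mono[OF S2_ge, of "S2 * (S2 * S2)"] S2_nonneg by simp
  have C: "S2 * (S2 * S2) * (real n * S2) \<le> S2 * (S2 * S2) * (real n * S2) * (real n / 25)"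
  proof -
    have "real n / 25 \<ge> 1" using n25 by simp
    moreover have "S2 * (S2 * S2) * (real n * S2) \<ge> 0" using S2_nonneg by simp
    ultimately show ?thesis using mult_left_mono[of 1 "real n / 25" "S2 * (S2 * S2) * (real n * S2)"] by simp
  qed
  have D: "S2 * (S2 * S2) * (real n * S2) * (real n / 25) = (real n / 5 * S2^2)^2"
    by (simp add: power2_eq_square)
  have "S3^2 \<le> (real n / 5 * S2^2)^2" using A B C D by linarith
  thus ?thesis by (rule power2_le_imp_le) simp
qed

end


context chb begin

lemma cheb:
  fixes \<epsilon> :: real
  assumes eps: "0 < \<epsilon>" "\<epsilon> < 1/3" and nm: "real n \<le> \<epsilon>^2 * real m" and n25: "n \<ge> 25"
  shows "prodprob q m {y \<in> cube U m. \<bar>(\<Sum>i=1..n. real (kcount h m y i) * (real (kcount h m y i) - 1)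
            / (real m * (real m - 1))) / normsq U q h n - 1\<bar> \<le> 3 * \<epsilon>} \<ge> 9/10"
    (is "prodprob q m ?A \<ge> _")
proof -
  define Omm where "Omm = Om U {..<m}"
  have cube: "cube U m = Omm" unfolding cube_def Om_def Omm_def by simp
  have pp: "prodprob q m S = Pr q {..<m} S" for S unfolding prodprob_def Pr_def Wt_def by simp
  have finO: "finite Omm" unfolding Omm_def by (rule finite_Om[OF finU]) simp
  have S2N: "normsq U q h n = S2" unfolding normsq_def S2_def pb_def ..
  have S2p: "S2 > 0"
  proof -
    have "S2 \<noteq> 0" using S2_ge by auto
    thus ?thesis using S2_nonneg by simp
  qed
  have e2: "\<epsilon>^2 \<le> 1/9"
  proof -
    have "\<epsilon>^2 \<le> (1/3)^2" using eps by (intro power_mono) auto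
    thus ?thesis by (simp add: power2_eq_square)
  qed
  have "\<epsilon>^2 * real m \<le> 1/9 * real m" using e2 by (intro mult_right_mono) auto
  hence m9: "9 * real n \<le> real m" using nm by linarith
  hence m225: "real m \<ge> 225" using n25 by simp
  define M1 where "M1 = real m * (real m - 1)"
  have M1p: "M1 > 0" unfolding M1_def using m225 by simp
  define \<mu> where "\<mu> = M1 * S2"
  have \<mu>p: "\<mu> > 0" unfolding \<mu>_def using M1p S2p by simp
  define Zx where "Zx x = (\<Sum>p\<in>PP. if fst p \<noteq> snd p then XX x (fst p) (snd p) else 0)" for x
  define t where "t = (3 * \<epsilon> * \<mu>)^2"
  have tp: "t > 0" unfolding t_def using eps \<mu>p by simp
  define Bd where "Bd = Omm - ?A"
  have AO: "?A \<subseteq> Omm" using cube by auto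
  have bad: "1 \<le> (\<Sum>p\<in>PP. YY x p)^2 / t" if x: "x \<in> Bd" for x
  proof -
    have xO: "x \<in> Omm" and nA: "x \<notin> ?A" using x unfolding Bd_def by auto
    have "(\<Sum>i=1..n. real (kcount h m x i) * (real (kcount h m x i) - 1) / (real m * (real m - 1)))
        = Zx x / M1"
      unfolding sum_divide_distrib[symmetric] M1_def Zx_def using kZ xO unfolding Omm_def by simp
    hence "\<bar>Zx x / M1 / S2 - 1\<bar> > 3 * \<epsilon>" using nA xO cube S2N by auto
    moreover have "Zx x / M1 / S2 - 1 = (Zx x - \<mu>) / \<mu>"
      unfolding \<mu>_def using M1p S2p by (simp add: field_simps)
    ultimately have "\<bar>Zx x - \<mu>\<bar> / \<mu> > 3 * \<epsilon>" using \<mu>p by simp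
    hence "\<bar>Zx x - \<mu>\<bar> > 3 * \<epsilon> * \<mu>" using \<mu>p by (simp add: less_divide_eq)
    hence "(3 * \<epsilon> * \<mu>)^2 \<le> \<bar>Zx x - \<mu>\<bar>^2" using eps \<mu>p by (intro power_mono) auto
    hence "t \<le> (Zx x - \<mu>)^2" unfolding t_def by simp
    moreover have "(\<Sum>p\<in>PP. YY x p) = Zx x - \<mu>" unfolding sumY Zx_def \<mu>_def M1_def by simp
    ultimately show ?thesis using tp by simp
  qed
  have "Pr q {..<m} Bd \<le> (\<Sum>x\<in>Bd. Wt q {..<m} x * ((\<Sum>p\<in>PP. YY x p)^2 / t))"
    unfolding Pr_def
  proof (rule sum_mono)
    fix x assume x: "x \<in> Bd"
    hence "x \<in> Om U {..<m}" unfolding Bd_def Omm_def by (rule DiffD1)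
    hence "Wt q {..<m} x \<ge> 0" by (rule Wt_nonneg[OF qn])
    from mult_left_mono[OF bad[OF x] this]
    show "Wt q {..<m} x \<le> Wt q {..<m} x * ((\<Sum>p\<in>PP. YY x p)^2 / t)" by simp
  qed
  also have "\<dots> \<le> (\<Sum>x\<in>Omm. Wt q {..<m} x * ((\<Sum>p\<in>PP. YY x p)^2 / t))"
  proof (rule sum_mono2[OF finO])
    show "Bd \<subseteq> Omm" unfolding Bd_def by (rule Diff_subset)
    fix x assume "x \<in> Omm - Bd"
    hence "Wt q {..<m} x \<ge> 0" using Wt_nonneg[OF qn] unfolding Omm_def by blast
    thus "0 \<le> Wt q {..<m} x * ((\<Sum>p\<in>PP. YY x p)^2 / t)" using tp by simp
  qed
  also have "\<dots> = EE (\<lambda>x. (\<Sum>p\<in>PP. YY x p)^2) / t"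
    unfolding EE_def Omm_def by (simp add: sum_divide_distrib)
  also have "\<dots> \<le> M1 * (4 * real m * S3 + 2 * S2) / t"
    using var_bound tp unfolding M1_def by (intro divide_right_mono) auto
  also have "\<dots> \<le> 1/10"
  proof -
    have "10 * (4 * real m * S3 + 2 * S2) \<le> 10 * (4 * real m * (real n / 5 * S2^2) + 2 * (real n * S2^2))"
    proof -
      have "real m * S3 \<le> real m * (real n / 5 * S2^2)" using S3_le[OF n25] by (intro mult_left_mono) auto
      moreover have "S2 \<le> real n * S2^2"
        using mult_right_mono[OF S2_ge, of S2] S2_nonneg by (simp add: power2_eq_square algebra_simps)
      ultimately show ?thesis by simp
    qed
    also have "\<dots> = (8 * real m + 20) * (real n * S2^2)" by (simp add: algebra_simps)
    also have "\<dots> \<le> (9 * (real m - 1)) * (real n * S2^2)"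
      using m225 by (intro mult_right_mono) auto
    also have "\<dots> = (9 * (real m - 1) * S2^2) * real n" by (simp add: algebra_simps)
    also have "\<dots> \<le> (9 * (real m - 1) * S2^2) * (\<epsilon>^2 * real m)"
      using nm m225 by (intro mult_left_mono) auto
    also have "\<dots> = 9 * \<epsilon>^2 * M1 * S2^2" unfolding M1_def by (simp add: algebra_simps)
    finally have k: "10 * (4 * real m * S3 + 2 * S2) \<le> 9 * \<epsilon>^2 * M1 * S2^2" .
    have "10 * (M1 * (4 * real m * S3 + 2 * S2)) \<le> M1 * (9 * \<epsilon>^2 * M1 * S2^2)"
      using mult_left_mono[OF k, of M1] M1p by (simp add: algebra_simps)
    also have "\<dots> = t" unfolding t_def \<mu>_def by (simp add: power2_eq_square algebra_simps)
    finally show ?thesis using tp by (simp add: divide_le_eq)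
  qed
  finally have PB: "Pr q {..<m} Bd \<le> 1/10" .
  have "Pr q {..<m} Omm = 1" unfolding Pr_def Omm_def by (rule sum_Wt[OF finU _ qs]) simp
  moreover have "Pr q {..<m} Omm = Pr q {..<m} ?A + Pr q {..<m} Bd"
    unfolding Pr_def Bd_def using sum.subset_diff[OF AO finO, of "Wt q {..<m}"] by linarith
  ultimately show ?thesis using PB pp by simp
qed

end

theorem mainTheorem9:
  fixes U :: "'a set" and q :: "'a \<Rightarrow> real" and h :: "'a \<Rightarrow> nat"
    and n m :: nat and \<epsilon> \<delta> s :: real
  assumes finU: "finite U"
    and q_nonneg: "\<forall>u\<in>U. q u \<ge> 0"
    and q_sum: "(\<Sum>u\<in>U. q u) = 1"
    and h_range: "\<forall>u\<in>U. h u \<in> {1..n}"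
    and n_gt: "n > 24"
    and eps_pos: "0 < \<epsilon>" and eps_lt: "\<epsilon> < 1/3"
    and delta_pos: "\<delta> > 0"
    and m_def: "real m = \<epsilon> powr (-2) * real n powr (1 + \<delta>)"
    and s_pos: "s > 0"
  defines "A \<equiv> {y \<in> cube U m.
             \<bar>(\<Sum>i=1..n. real (kcount h m y i) * (real (kcount h m y i) - 1)
                        / (real m * (real m - 1))) / normsq U q h n - 1\<bar> \<le> 3 * \<epsilon>}"
  defines "C \<equiv> {x \<in> cube U m. convex_dist m x A < ereal s}"
  shows "prodprob q m C \<ge> 1 - 10/9 * exp (- (s^2) / 4)"
proof -
  interpret chb U q h n m using finU q_nonneg q_sum h_range by unfold_locales
  have npos: "real n > 0" using n_gt by simp
  have p2: "\<epsilon> powr (-2) = inverse (\<epsilon>^2)"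
    using eps_pos by (simp only: powr_minus powr_numeral)
  have e2: "\<epsilon>^2 * \<epsilon> powr (-2) = 1"
    unfolding p2 using eps_pos by simp
  have pa: "real n powr (1 + \<delta>) = real n * real n powr \<delta>"
    using npos by (simp only: powr_add powr_one_gt_zero_iff powr_one)
  have "real n powr \<delta> \<ge> 1" using n_gt delta_pos by (intro ge_one_powr_ge_zero) auto
  hence "real n * 1 \<le> real n * real n powr \<delta>" using npos by (intro mult_left_mono) auto
  hence g: "real n powr (1 + \<delta>) \<ge> real n" unfolding pa by simp
  have "\<epsilon>^2 * real m = (\<epsilon>^2 * \<epsilon> powr (-2)) * real n powr (1 + \<delta>)"
    unfolding m_def by (simp only: mult.assoc)
  hence "\<epsilon>^2 * real m = real n powr (1 + \<delta>)" unfolding e2 by simp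
  hence nm: "real n \<le> \<epsilon>^2 * real m" using g by linarith
  have n25: "n \<ge> 25" using n_gt by simp
  have PA: "prodprob q m A \<ge> 9/10"
    unfolding A_def by (rule cheb[OF eps_pos eps_lt nm n25])
  have AO: "A \<subseteq> cube U m" unfolding A_def by (rule Collect_restrict)
  show ?thesis by (rule final_step[OF finU q_nonneg q_sum AO PA s_pos C_def[THEN meta_eq_to_obj_eq]])
qed

end
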